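(* Let $X \subset Y \subset \mathbb{R}^{n}$ be finite sets, let $k \geq 0$ be an integer, let $r > 0$ and $s \geq 0$. Suppose that $X^{k+1}_{dis}$ is $r$-dense in $Y^{k+1}_{dis}$ and that $L_{s,k}(Y) \neq \emptyset$. Then there is a simplicial map $\theta: L_{s,k}(Y) \to L_{s+2r,k}(X)$ such that, for the inclusions $j: L_{s,k}(X) \to L_{s+2r,k}(X)$, $j: L_{s,k}(Y) \to L_{s+2r,k}(Y)$ and $i: L_{s,k}(X) \to L_{s,k}(Y)$, $i: L_{s+2r,k}(X) \to L_{s+2r,k}(Y)$, one has $\theta \circ i = j$ (strict commutativity of the upper triangle), and $i \circ \theta$ is homotopic to $j: L_{s,k}(Y) \to L_{s+2r,k}(Y)$ after geometric realization.
   Context: $\mathbb{R}^n$ carries the Euclidean metric $d$. For subsets $A \subset B$ of a metric space and $r>0$, $A$ is $r$-dense in $B$ if for every $b \in B$ there is an $a \in A$ with $d(a,b) < r$. For a finite $X \subset \mathbb{R}^n$ and $s \ge 0$, $V_{s}(X)$ is the Vietoris–Rips complex: vertex set $X$, simplices the nonempty subsets $\{x_0,\dots,x_p\}$ with $d(x_i,x_j) \le s$ for all $i,j$. For an integer $k \geq 0$, the Lesnick complex $L_{s,k}(X)$ is the full subcomplex of $V_{s}(X)$ on the set of vertices $x \in X$ for which there exist at least $k$ points $x' \in X$, distinct from $x$, with $d(x,x') \leq s$. $X^{k+1}_{dis}$ denotes the set of ordered $(k+1)$-tuples of pairwise distinct points of $X$, regarded as a subset of $(\mathbb{R}^{n})^{k+1}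 = \mathbb{R}^{n(k+1)}$ with its Euclidean metric. *)

theory Defs
  imports "HOL-Analysis.Analysis"
begin

definition r_dense :: "real \<Rightarrow> 'b::metric_space set \<Rightarrow> 'b set \<Rightarrow> bool" where
  "r_dense r A B \<longleftrightarrow> (\<forall>b\<in>B. \<exists>a\<in>A. dist a b < r)"

text \<open>Ordered (k+1)-tuples of pairwise distinct points of X, represented as lists.\<close>
definition dis_tuples :: "'a set \<Rightarrow> nat \<Rightarrow> 'a list set" where
  "dis_tuples X k = {xs. length xs = k + 1 \<and> distinct xs \<and> set xs \<subseteq> X}"

definition tuple_dist :: "('a::metric_space) list \<Rightarrow> 'a list \<Rightarrow> real" where
  "tuple_dist xs ys = sqrt (\<Sum>i<length xs. (dist (xs!i) (ys!i))\<^sup>2)"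

definition r_dense_tuples :: "real \<Rightarrow> ('a::metric_space) list set \<Rightarrow> 'a list set \<Rightarrow> bool" where
  "r_dense_tuples r A B \<longleftrightarrow> (\<forall>b\<in>B. \<exists>a\<in>A. tuple_dist a b < r)"

text \<open>Simplicial complexes as sets of (nonempty finite) simplices.\<close>
definition vertices :: "'a set set \<Rightarrow> 'a set" where
  "vertices K = \<Union>K"

definition vietoris_rips :: "real \<Rightarrow> ('a::metric_space) set \<Rightarrow> 'a set set" where
  "vietoris_rips s X = {\<sigma>. \<sigma> \<noteq> {} \<and> \<sigma> \<subseteq> X \<and> (\<forall>x\<in>\<sigma>. \<forall>y\<in>\<sigma>. dist x y \<le> s)}"

definition lesnick_vertices :: "real \<Rightarrow> nat \<Rightarrow> ('a::metric_space) set \<Rightarrow> 'a set" where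
  "lesnick_vertices s k X = {x\<in>X. card {x'\<in>X. x' \<noteq> x \<and> dist x x' \<le> s} \<ge> k}"

definition lesnick :: "real \<Rightarrow> nat \<Rightarrow> ('a::metric_space) set \<Rightarrow> 'a set set" where
  "lesnick s k X = {\<sigma>\<in>vietoris_rips s X. \<sigma> \<subseteq> lesnick_vertices s k X}"

definition simplicial_map :: "'a set set \<Rightarrow> 'b set set \<Rightarrow> ('a \<Rightarrow> 'b) \<Rightarrow> bool" where
  "simplicial_map K L f \<longleftrightarrow> (\<forall>\<sigma>\<in>K. f ` \<sigma> \<in> L)"

text \<open>Geometric realization: barycentric-coordinate functions whose support is a simplex,
  with the subspace topology of the product topology on functions to R.\<close>
definition geom_carrier :: "'a set set \<Rightarrow> ('a \<Rightarrow> real) set" where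
  "geom_carrier K = {f. (\<forall>x. f x \<ge> 0) \<and> {x. f x \<noteq> 0} \<in> K \<and> sum f {x. f x \<noteq> 0} = 1}"

definition geom_real :: "'a set set \<Rightarrow> ('a \<Rightarrow> real) topology" where
  "geom_real K = subtopology (powertop_real UNIV) (geom_carrier K)"

text \<open>Affine extension of a vertex map (V = vertex set of the source complex).\<close>
definition real_map :: "'a set \<Rightarrow> ('a \<Rightarrow> 'b) \<Rightarrow> ('a \<Rightarrow> real) \<Rightarrow> ('b \<Rightarrow> real)" where
  "real_map V g f = (\<lambda>y. \<Sum>x\<in>{x\<in>V. g x = y}. f x)"

end

theory Submission
  imports Defs
begin

lemma dist_le_tuple_dist:
  assumes "i < length xs"
  shows "dist (xs!i) (ys!i) \<le> tuple_dist xs ys"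
proof -
  have "(dist (xs!i) (ys!i))\<^sup>2 \<le> (\<Sum>j<length xs. (dist (xs!j) (ys!j))\<^sup>2)"
    using assms by (intro member_le_sum) auto
  then have "sqrt ((dist (xs!i) (ys!i))\<^sup>2) \<le> tuple_dist xs ys"
    unfolding tuple_dist_def by (rule real_sqrt_le_mono)
  then show ?thesis by simp
qed

lemma LV_mono:
  assumes "finite Y" "X \<subseteq> Y" "s \<le> t"
  shows "lesnick_vertices s k X \<subseteq> lesnick_vertices t k Y"
proof
  fix x assume x: "x \<in> lesnick_vertices s k X"
  have "card {x'\<in>X. x' \<noteq> x \<and> dist x x' \<le> s} \<le> card {x'\<in>Y. x' \<noteq> x \<and> dist x x' \<le> t}"
    using assms by (intro card_mono) auto
  with x assms show "x \<in> lesnick_vertices t k Y"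
    unfolding lesnick_vertices_def by auto
qed

lemma key:
  fixes X Y :: "('a::metric_space) set"
  assumes "finite Y" "X \<subseteq> Y"
    and dense: "r_dense_tuples r (dis_tuples X k) (dis_tuples Y k)"
    and y: "y \<in> lesnick_vertices s k Y"
  shows "\<exists>x. x \<in> lesnick_vertices (s + 2*r) k X \<and> dist x y < r"
proof -
  let ?N = "{x'\<in>Y. x' \<noteq> y \<and> dist y x' \<le> s}"
  have fN: "finite ?N" using assms(1) by auto
  have "card ?N \<ge> k" using y unfolding lesnick_vertices_def by auto
  then obtain A where A: "A \<subseteq> ?N" "card A = k" and fA: "finite A"
    by (rule obtain_subset_with_card_n)
  then obtain ys where ys: "set ys = A" "distinct ys" using finite_distinct_list by blast
  have lys: "length ys = k" using distinct_card[OF ys(2)] ys(1) A(2) by simp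
  have yY: "y \<in> Y" using y unfolding lesnick_vertices_def by auto
  have "y # ys \<in> dis_tuples Y k"
    unfolding dis_tuples_def using ys lys A yY by auto
  then obtain a where a: "a \<in> dis_tuples X k" "tuple_dist a (y # ys) < r"
    using dense unfolding r_dense_tuples_def by blast
  have la: "length a = k + 1" and da: "distinct a" and sa: "set a \<subseteq> X"
    using a(1) unfolding dis_tuples_def by auto
  have close: "dist (a!i) ((y#ys)!i) < r" if "i < k + 1" for i
  proof -
    have "i < length a" using la that by simp
    then have "dist (a!i) ((y#ys)!i) \<le> tuple_dist a (y#ys)" by (rule dist_le_tuple_dist)
    with a(2) show ?thesis by linarith
  qed
  define x where "x = a!0"
  have dxy: "dist x y < r" using close[of 0] x_def by simp
  have "x \<in> set a" unfolding x_def using la by (intro nth_mem) simp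
  then have xX: "x \<in> X" using sa by auto
  let ?M = "{x'\<in>X. x' \<noteq> x \<and> dist x x' \<le> s + 2*r}"
  have sub: "set (tl a) \<subseteq> ?M"
  proof
    fix z assume z: "z \<in> set (tl a)"
    then obtain j where j0: "j < length (tl a)" "tl a ! j = z" by (auto simp: in_set_conv_nth)
    then have j: "j < k" "z = tl a ! j" using la by auto
    have zj: "z = a ! Suc j" using j la by (simp add: nth_tl)
    have "Suc j < length a" using j la by simp
    then have zX: "z \<in> X" using sa zj nth_mem by blast
    have "a ! Suc j \<noteq> a ! 0" using nth_eq_iff_index_eq[OF da \<open>Suc j < length a\<close>, of 0] \<open>Suc j < length a\<close> by force
    then have zx: "z \<noteq> x" using zj x_def by simp
    have "ys ! j \<in> set ys" using lys j by simp
    then have "ys ! j \<in> A" using ys(1) by simp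
    then have d1: "dist y (ys!j) \<le> s" using A(1) by blast
    have "Suc j < k + 1" using j by simp
    then have d2: "dist z (ys!j) < r" using close[of "Suc j"] zj by simp
    have t1: "dist x z \<le> dist x y + dist y z" by (rule dist_triangle)
    have t2: "dist y z \<le> dist y (ys!j) + dist (ys!j) z" by (rule dist_triangle)
    have "dist (ys!j) z = dist z (ys!j)" by (rule dist_commute)
    then have "dist x z \<le> s + 2*r" using t1 t2 dxy d1 d2 by linarith
    then show "z \<in> ?M" using zX zx by blast
  qed
  have ck: "card (set (tl a)) = k" using distinct_card[OF distinct_tl[OF da]] la by simp
  have "?M \<subseteq> Y" using assms(2) by blast
  then have fM: "finite ?M" using assms(1) by (rule finite_subset)
  have "card (set (tl a)) \<le> card ?M" by (rule card_mono[OF fM sub])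
  then have "card ?M \<ge> k" using ck by simp
  then have "x \<in> lesnick_vertices (s + 2*r) k X" using xX unfolding lesnick_vertices_def by blast
  with dxy show ?thesis by blast
qed


lemma lesnick_sub:
  assumes "\<tau> \<subseteq> \<rho>" "\<tau> \<noteq> {}" "\<rho> \<in> lesnick t k Y"
  shows "\<tau> \<in> lesnick t k Y"
  using assms unfolding lesnick_def vietoris_rips_def by (simp add: subset_iff)

lemma RM:
  assumes "finite V" "{x. f x \<noteq> 0} \<subseteq> V"
  shows "real_map V g f y = sum f {x. f x \<noteq> 0 \<and> g x = y}"
  unfolding real_map_def using assms by (intro sum.mono_neutral_right) auto

lemma RM_id:
  assumes "finite V" "{x. f x \<noteq> 0} \<subseteq> V"
  shows "real_map V id f = f"
proof
  fix y
  show "real_map V id f y = f y"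
  proof (cases "f y = 0")
    case True
    then have "{x. f x \<noteq> 0 \<and> id x = y} = {}" by auto
    then show ?thesis using RM[OF assms, of id y] True by simp
  next
    case False
    then have "{x. f x \<noteq> 0 \<and> id x = y} = {y}" by auto
    then show ?thesis using RM[OF assms, of id y] by simp
  qed
qed

lemma proj_cont:
  "continuous_map (prod_topology (top_of_set T) (geom_real K)) euclideanreal (\<lambda>p. snd p x)"
proof -
  have "continuous_map (geom_real K) euclideanreal (\<lambda>f. f x)"
    unfolding geom_real_def
    by (intro continuous_map_from_subtopology continuous_map_product_projection) simp
  then have "continuous_map (prod_topology (top_of_set T) (geom_real K)) euclideanreal ((\<lambda>f. f x) \<circ> snd)"
    using continuous_map_compose continuous_map_snd by blast
  then show ?thesis by (simp add: o_def)
qed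

lemma fst_cont:
  "continuous_map (prod_topology (top_of_set T) Z) euclideanreal fst"
  using continuous_map_fst continuous_map_into_fulltopology by blast

lemma RM_cont:
  assumes "finite V"
  shows "continuous_map (prod_topology (top_of_set T) (geom_real K)) euclideanreal
     (\<lambda>p. real_map V g (snd p) y)"
  unfolding real_map_def using assms
  by (intro continuous_map_sum proj_cont) auto

theorem theorem3:
  fixes X Y :: "(real ^ 'n) set" and k :: nat and r s :: real
  assumes "finite Y" and "X \<subseteq> Y" and "r > 0" and "s \<ge> 0"
    and "r_dense_tuples r (dis_tuples X k) (dis_tuples Y k)"
    and "lesnick s k Y \<noteq> {}"
  shows "\<exists>\<theta>. simplicial_map (lesnick s k Y) (lesnick (s + 2 * r) k X) \<theta>
          \<and> (\<forall>x\<in>vertices (lesnick s k X). \<theta> x = x)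
          \<and> homotopic_with (\<lambda>_. True) (geom_real (lesnick s k Y)) (geom_real (lesnick (s + 2 * r) k Y))
              (real_map (vertices (lesnick s k Y)) \<theta>) (real_map (vertices (lesnick s k Y)) id)"
proof -
  have fX: "finite X" using assms(1,2) finite_subset by blast
  define \<theta> where "\<theta> y = (if y \<in> lesnick_vertices s k X then y
      else SOME x. x \<in> lesnick_vertices (s + 2*r) k X \<and> dist x y < r)" for y
  have th: "\<theta> y \<in> lesnick_vertices (s + 2*r) k X \<and> dist (\<theta> y) y < r"
    if y: "y \<in> lesnick_vertices s k Y" for y
  proof (cases "y \<in> lesnick_vertices s k X")
    case True
    then show ?thesis using LV_mono[OF fX order_refl, of s "s + 2*r" k] assms(3)
      unfolding \<theta>_def by auto
  next
    case False
    have "\<exists>x. x \<in> lesnick_vertices (s + 2*r) k X \<and> dist x y < r"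
      using key[OF assms(1,2,5) y] .
    from someI_ex[OF this] show ?thesis unfolding \<theta>_def using False by simp
  qed
  have LVX: "lesnick_vertices t k X \<subseteq> X" for t unfolding lesnick_vertices_def by auto
  have LVXY: "lesnick_vertices (s + 2*r) k X \<subseteq> lesnick_vertices (s + 2*r) k Y"
    using LV_mono[OF assms(1,2), of "s + 2*r" "s + 2*r" k] by simp
  have LVYY: "lesnick_vertices s k Y \<subseteq> lesnick_vertices (s + 2*r) k Y"
    using LV_mono[OF assms(1) order_refl, of s "s + 2*r" k] assms(3) by simp
  have Kprops: "\<sigma> \<noteq> {} \<and> \<sigma> \<subseteq> Y \<and> (\<forall>x\<in>\<sigma>. \<forall>y\<in>\<sigma>. dist x y \<le> s) \<and> \<sigma> \<subseteq> lesnick_vertices s k Y"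
    if "\<sigma> \<in> lesnick s k Y" for \<sigma>
    using that unfolding lesnick_def vietoris_rips_def by auto
  have dth: "dist (\<theta> x) (\<theta> y) \<le> s + 2*r" and dth1: "dist (\<theta> x) y \<le> s + 2*r"
    if "\<sigma> \<in> lesnick s k Y" "x \<in> \<sigma>" "y \<in> \<sigma>" for \<sigma> x y
  proof -
    have x: "x \<in> lesnick_vertices s k Y" and y: "y \<in> lesnick_vertices s k Y"
      and dxy: "dist x y \<le> s" using Kprops[OF that(1)] that by auto
    have a: "dist (\<theta> x) x < r" using th[OF x] by auto
    have b: "dist (\<theta> y) y < r" using th[OF y] by auto
    show "dist (\<theta> x) (\<theta> y) \<le> s + 2*r"
      using dist_triangle[of "\<theta> x" "\<theta> y" x] dist_triangle[of x "\<theta> y" y] a b dxy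
      by (simp add: dist_commute)
    show "dist (\<theta> x) y \<le> s + 2*r"
      using dist_triangle[of "\<theta> x" y x] a dxy assms(3) by simp
  qed
  have simp_map: "simplicial_map (lesnick s k Y) (lesnick (s + 2 * r) k X) \<theta>"
    unfolding simplicial_map_def
  proof
    fix \<sigma> assume \<sigma>: "\<sigma> \<in> lesnick s k Y"
    note P = Kprops[OF \<sigma>]
    have "\<theta> ` \<sigma> \<subseteq> lesnick_vertices (s + 2*r) k X" using th P by auto
    then show "\<theta> ` \<sigma> \<in> lesnick (s + 2 * r) k X"
      unfolding lesnick_def vietoris_rips_def using P LVX dth[OF \<sigma>] by auto
  qed
  have fix_pt: "\<forall>x\<in>vertices (lesnick s k X). \<theta> x = x"
    unfolding vertices_def lesnick_def \<theta>_def by auto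
  have contig: "\<sigma> \<union> \<theta> ` \<sigma> \<in> lesnick (s + 2*r) k Y" if \<sigma>: "\<sigma> \<in> lesnick s k Y" for \<sigma>
  proof -
    note P = Kprops[OF \<sigma>]
    have A: "\<theta> ` \<sigma> \<subseteq> lesnick_vertices (s + 2*r) k X" using th P by auto
    have B: "\<sigma> \<union> \<theta> ` \<sigma> \<subseteq> lesnick_vertices (s + 2*r) k Y" using A P LVXY LVYY by auto
    have C: "\<sigma> \<union> \<theta> ` \<sigma> \<subseteq> Y" using A LVX assms(2) P by auto
    have P2: "\<forall>x\<in>\<sigma>. \<forall>y\<in>\<sigma>. dist x y \<le> s + 2*r"
      using P assms(3) by (meson add_increasing2 less_eq_real_def mult_pos_pos order_trans zero_less_numeral)
    have D: "\<forall>x\<in>\<sigma> \<union> \<theta> ` \<sigma>. \<forall>y\<in>\<sigma> \<union> \<theta> ` \<sigma>. dist x y \<le> s + 2*r"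
      using P2 dth[OF \<sigma>] dth1[OF \<sigma>] by (auto simp: dist_commute)
    show ?thesis unfolding lesnick_def vietoris_rips_def using B C D P by auto
  qed
  define V where "V = vertices (lesnick s k Y)"
  have fV: "finite V" unfolding V_def vertices_def
    using Kprops assms(1) by (meson Sup_least finite_subset)
  define h where "h p = (\<lambda>y. (1 - fst p) * real_map V \<theta> (snd p) y + fst p * real_map V id (snd p) y)"
    for p :: "real \<times> (real^'n \<Rightarrow> real)"
  have carrier: "h (t, f) \<in> geom_carrier (lesnick (s + 2*r) k Y)"
    if t: "t \<in> {0..1}" and f: "f \<in> geom_carrier (lesnick s k Y)" for t f
  proof -
    define \<sigma> where "\<sigma> = {x. f x \<noteq> 0}"
    have fpos: "\<forall>x. f x \<ge> 0" and \<sigma>K: "\<sigma> \<in> lesnick s k Y" and s1: "sum f \<sigma> = 1"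
      using f unfolding geom_carrier_def \<sigma>_def by auto
    have \<sigma>V: "\<sigma> \<subseteq> V" using \<sigma>K unfolding V_def vertices_def by auto
    have f\<sigma>: "finite \<sigma>" using \<sigma>V fV finite_subset by blast
    have R: "real_map V \<theta> f y = sum f {x\<in>\<sigma>. \<theta> x = y}" for y
      using RM[OF fV \<sigma>V[unfolded \<sigma>_def], of \<theta> y] unfolding \<sigma>_def by simp
    have I: "real_map V id f = f" using RM_id[OF fV \<sigma>V[unfolded \<sigma>_def]] .
    have hv: "h (t, f) y = (1 - t) * sum f {x\<in>\<sigma>. \<theta> x = y} + t * f y" for y
      unfolding h_def using R I by simp
    have hpos: "h (t, f) y \<ge> 0" for y
      unfolding hv using t fpos by (auto intro!: sum_nonneg add_nonneg_nonneg mult_nonneg_nonneg)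
    define S where "S = \<sigma> \<union> \<theta> ` \<sigma>"
    have fS: "finite S" using f\<sigma> S_def by auto
    have out: "h (t, f) y = 0" if "y \<notin> S" for y
    proof -
      have "{x\<in>\<sigma>. \<theta> x = y} = {}" using that S_def by auto
      then have "sum f {x\<in>\<sigma>. \<theta> x = y} = 0" by (simp only: sum.empty)
      moreover have "f y = 0" using that S_def \<sigma>_def by auto
      ultimately show ?thesis unfolding hv by simp
    qed
    have sub: "{y. h (t, f) y \<noteq> 0} \<subseteq> S" using out by blast
    have "sum f S = sum f \<sigma>"
      by (rule sum.mono_neutral_right[OF fS]) (auto simp: S_def \<sigma>_def)
    with s1 have sumf: "sum f S = 1" by simp
    have "sum f \<sigma> = (\<Sum>y\<in>\<theta> ` \<sigma>. sum f {x\<in>\<sigma>. \<theta> x = y})"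
      using sum.image_gen[OF f\<sigma>, of f \<theta>] .
    also have "\<dots> = (\<Sum>y\<in>S. sum f {x\<in>\<sigma>. \<theta> x = y})"
    proof (rule sum.mono_neutral_left[OF fS])
      show "\<theta> ` \<sigma> \<subseteq> S" by (simp add: S_def)
      show "\<forall>i\<in>S - \<theta> ` \<sigma>. sum f {x\<in>\<sigma>. \<theta> x = i} = 0"
      proof
        fix i assume "i \<in> S - \<theta> ` \<sigma>"
        then have "{x\<in>\<sigma>. \<theta> x = i} = {}" by blast
        then show "sum f {x\<in>\<sigma>. \<theta> x = i} = 0" by (simp only: sum.empty)
      qed
    qed
    finally have sumR: "(\<Sum>y\<in>S. sum f {x\<in>\<sigma>. \<theta> x = y}) = 1" using s1 by simp
    have sumh: "sum (h (t, f)) S = 1"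
      unfolding hv sum.distrib sum_distrib_left[symmetric] using sumR sumf by simp
    have "sum (h (t, f)) {y. h (t, f) y \<noteq> 0} = sum (h (t, f)) S"
      by (rule sum.mono_neutral_left[OF fS sub]) simp
    with sumh have sumh2: "sum (h (t, f)) {y. h (t, f) y \<noteq> 0} = 1" by simp
    have ne: "{y. h (t, f) y \<noteq> 0} \<noteq> {}"
    proof
      assume "{y. h (t, f) y \<noteq> 0} = {}"
      then have "\<forall>y. h (t, f) y = 0" by blast
      then have "sum (h (t, f)) S = 0" by simp
      then show False using sumh by simp
    qed
    have "{y. h (t, f) y \<noteq> 0} \<in> lesnick (s + 2*r) k Y"
      using lesnick_sub[OF sub[unfolded S_def] ne contig[OF \<sigma>K]] .
    then show ?thesis unfolding geom_carrier_def using hpos sumh2 by auto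
  qed
  have cont: "continuous_map (prod_topology (top_of_set {0..1::real}) (geom_real (lesnick s k Y)))
      (geom_real (lesnick (s + 2 * r) k Y)) h"
  proof -
    have "continuous_map (prod_topology (top_of_set {0..1::real}) (geom_real (lesnick s k Y)))
      (powertop_real UNIV) h"
      unfolding continuous_map_componentwise_UNIV h_def
      by (intro allI continuous_intros fst_cont RM_cont fV)
    moreover have "h \<in> topspace (prod_topology (top_of_set {0..1::real}) (geom_real (lesnick s k Y)))
       \<rightarrow> geom_carrier (lesnick (s + 2 * r) k Y)"
      using carrier by (auto simp: geom_real_def)
    ultimately show ?thesis unfolding geom_real_def[of "lesnick (s + 2 * r) k Y"]
      by (simp add: continuous_map_in_subtopology)
  qed
  have "homotopic_with (\<lambda>_. True) (geom_real (lesnick s k Y)) (geom_real (lesnick (s + 2 * r) k Y))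
              (real_map V \<theta>) (real_map V id)"
    unfolding homotopic_with_def
    by (intro exI[of _ h] conjI cont) (auto simp: h_def)
  then show ?thesis using simp_map fix_pt unfolding V_def by blast
qed

end
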